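(* Let $\alpha\in(0,1)$ and $\beta=\frac{1}{1+\ln\frac1\alpha}$. Let $G'_\alpha$ be the two-player zero-sum game in which the $x$-player (minimizer) and the $y$-player (maximizer) choose $x\in[0,1-\alpha]$ and $y\in[0,1-\alpha]$ respectively (mixed strategies being probability distributions on $[0,1-\alpha]$), with payoff $h(x,y)=\frac{(1-y)\mathbf{1}_{y\ge x}}{1-x}$. Then the value of $G'_\alpha$ is $\beta$. Moreover, an optimal strategy of the $x$-player is the distribution with an atom of weight $\beta$ at $x=0$ and density $f_X(x)=\frac{\beta}{1-x}$ on $[0,1-\alpha]$, and an optimal strategy of the $y$-player is the distribution with an atom of weight $\beta$ at $y=1-\alpha$ and density $f_Y(y)=\frac{\beta}{1-y}$ on $[0,1-\alpha]$. *)

theory Defs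
  imports "HOL-Probability.Probability"
begin

definition beta :: "real \<Rightarrow> real" where
  "beta \<alpha> = 1 / (1 + ln (1 / \<alpha>))"

definition payoff :: "real \<Rightarrow> real \<Rightarrow> real" where
  "payoff x y = (1 - y) * indicator {x..} y / (1 - x)"

definition strategies :: "real \<Rightarrow> real measure set" where
  "strategies \<alpha> = {M. prob_space M \<and> sets M = sets borel \<and> emeasure M {0..1-\<alpha>} = 1}"

definition exp_payoff :: "real measure \<Rightarrow> real measure \<Rightarrow> real" where
  "exp_payoff p q = (\<integral>x. (\<integral>y. payoff x y \<partial>q) \<partial>p)"

definition lower_value :: "real \<Rightarrow> real" where
  "lower_value \<alpha> = (SUP q\<in>strategies \<alpha>. INF p\<in>strategies \<alpha>. exp_payoff p q)"

definition upper_value :: "real \<Rightarrow> real" where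
  "upper_value \<alpha> = (INF p\<in>strategies \<alpha>. SUP q\<in>strategies \<alpha>. exp_payoff p q)"

definition game_value_is :: "real \<Rightarrow> real \<Rightarrow> bool" where
  "game_value_is \<alpha> v \<longleftrightarrow> lower_value \<alpha> = v \<and> upper_value \<alpha> = v"

definition optimal_x :: "real \<Rightarrow> real \<Rightarrow> real measure \<Rightarrow> bool" where
  "optimal_x \<alpha> v p \<longleftrightarrow> p \<in> strategies \<alpha> \<and> (\<forall>q\<in>strategies \<alpha>. exp_payoff p q \<le> v)"

definition optimal_y :: "real \<Rightarrow> real \<Rightarrow> real measure \<Rightarrow> bool" where
  "optimal_y \<alpha> v q \<longleftrightarrow> q \<in> strategies \<alpha> \<and> (\<forall>p\<in>strategies \<alpha>. exp_payoff p q \<ge> v)"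

definition is_dist_X :: "real \<Rightarrow> real measure \<Rightarrow> bool" where
  "is_dist_X \<alpha> M \<longleftrightarrow> sets M = sets borel \<and>
     (\<forall>A\<in>sets borel. emeasure M A =
        ennreal (beta \<alpha>) * indicator A 0
        + (\<integral>\<^sup>+ x. ennreal (indicator ({0..1-\<alpha>} \<inter> A) x * beta \<alpha> / (1 - x)) \<partial>lborel))"

definition is_dist_Y :: "real \<Rightarrow> real measure \<Rightarrow> bool" where
  "is_dist_Y \<alpha> M \<longleftrightarrow> sets M = sets borel \<and>
     (\<forall>A\<in>sets borel. emeasure M A =
        ennreal (beta \<alpha>) * indicator A (1 - \<alpha>)
        + (\<integral>\<^sup>+ y. ennreal (indicator ({0..1-\<alpha>} \<inter> A) y * beta \<alpha> / (1 - y)) \<partial>lborel))"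

end

theory Submission imports Defs begin

lemma payoff_meas_borel: "case_prod payoff \<in> borel_measurable (borel \<Otimes>\<^sub>M borel)"
proof -
  have "case_prod payoff = (\<lambda>z. (1 - snd z) * (if fst z \<le> snd z then 1 else 0) / (1 - fst z))"
    by (auto simp: payoff_def indicator_def fun_eq_iff)
  moreover have "(\<lambda>z::real\<times>real. (1 - snd z) * (if fst z \<le> snd z then 1 else 0) / (1 - fst z)) \<in> borel_measurable (borel \<Otimes>\<^sub>M borel)"
    by measurable
  ultimately show ?thesis by simp
qed

lemma payoff_meas:
  assumes "sets M = sets borel" "sets N = sets borel"
  shows "case_prod payoff \<in> borel_measurable (M \<Otimes>\<^sub>M N)"
  using payoff_meas_borel measurable_cong_sets[OF sets_pair_measure_cong[OF assms] refl] by blast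

lemma payoff_meas_enn:
  assumes "sets M = sets borel" "sets N = sets borel"
  shows "(\<lambda>(x,y). ennreal (payoff x y)) \<in> borel_measurable (M \<Otimes>\<^sub>M N)"
  using payoff_meas[OF assms] by (simp add: split_beta')

lemma payoff_bounds:
  assumes "0 \<le> y" "y \<le> 1 - \<alpha>" "0 < \<alpha>"
  shows "0 \<le> payoff x y" "payoff x y \<le> 1"
  using assms by (auto simp: payoff_def indicator_def field_simps)

lemma exists_atom_plus:
  fixes N :: "real measure"
  assumes "sets N = sets borel" "c \<ge> 0"
  shows "\<exists>M. sets M = sets borel \<and> (\<forall>A\<in>sets borel. emeasure M A = c * indicator A a + emeasure N A)"
proof -
  define \<mu> where "\<mu> A = c * indicator A a + emeasure N A" for A
  have sa: "sigma_algebra UNIV (sets (borel::real measure))"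
    by (metis sets.sigma_algebra_axioms space_borel)
  have pos: "positive (sets borel) \<mu>"
    by (auto simp: positive_def \<mu>_def)
  have ca: "countably_additive (sets borel) \<mu>"
  proof (rule countably_additiveI)
    fix A :: "nat \<Rightarrow> real set"
    assume A: "range A \<subseteq> sets borel" "disjoint_family A"
    have "(\<Sum>i. \<mu> (A i)) = (\<Sum>i. c * indicator (A i) a) + (\<Sum>i. emeasure N (A i))"
      unfolding \<mu>_def by (rule suminf_add[symmetric]) auto
    also have "(\<Sum>i. c * indicator (A i) a) = c * indicator (\<Union>i. A i) a"
      using suminf_indicator[OF A(2)] by simp
    also have "(\<Sum>i. emeasure N (A i)) = emeasure N (\<Union>i. A i)"
      using A assms(1) by (intro suminf_emeasure) auto
    finally show "(\<Sum>i. \<mu> (A i)) = \<mu> (\<Union>i. A i)" unfolding \<mu>_def .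
  qed
  define M where "M = measure_of UNIV (sets borel) \<mu>"
  have "sets M = sets borel"
    unfolding M_def by (simp add: sa sigma_algebra.sigma_sets_eq sets_measure_of_conv)
  moreover have "\<forall>A\<in>sets borel. emeasure M A = \<mu> A"
    unfolding M_def using emeasure_measure_of_sigma[OF sa pos ca] by blast
  ultimately show ?thesis unfolding \<mu>_def by blast
qed

lemma nn_integral_atom_plus:
  fixes M N :: "real measure"
  assumes sM: "sets M = sets borel" and sN: "sets N = sets borel"
    and em: "\<forall>A\<in>sets borel. emeasure M A = c * indicator A a + emeasure N A"
    and f: "f \<in> borel_measurable borel"
  shows "(\<integral>\<^sup>+x. f x \<partial>M) = c * f a + (\<integral>\<^sup>+x. f x \<partial>N)"
  using f
proof (induction rule: borel_measurable_induct)
  case (cong f g)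
  then show ?case by (simp add: fun_eq_iff)
next
  case (set A)
  have "(\<integral>\<^sup>+x. indicator A x \<partial>M) = emeasure M A"
    using set sM by (simp add: nn_integral_indicator)
  moreover have "(\<integral>\<^sup>+x. indicator A x \<partial>N) = emeasure N A"
    using set sN by (simp add: nn_integral_indicator)
  ultimately show ?case using em set by simp
next
  case (mult u c')
  have "(\<integral>\<^sup>+x. c' * u x \<partial>M) = c' * (\<integral>\<^sup>+x. u x \<partial>M)"
    using mult measurable_cong_sets[OF sM refl] by (intro nn_integral_cmult) auto
  moreover have "(\<integral>\<^sup>+x. c' * u x \<partial>N) = c' * (\<integral>\<^sup>+x. u x \<partial>N)"
    using mult measurable_cong_sets[OF sN refl] by (intro nn_integral_cmult) auto
  ultimately show ?case using mult by (simp add: algebra_simps)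
next
  case (add u v)
  have mM: "u \<in> borel_measurable M" "v \<in> borel_measurable M"
    using add measurable_cong_sets[OF sM refl] by blast+
  have mN: "u \<in> borel_measurable N" "v \<in> borel_measurable N"
    using add measurable_cong_sets[OF sN refl] by blast+
  have "(\<integral>\<^sup>+x. v x + u x \<partial>M) = (\<integral>\<^sup>+x. v x \<partial>M) + (\<integral>\<^sup>+x. u x \<partial>M)"
    using mM by (intro nn_integral_add) auto
  moreover have "(\<integral>\<^sup>+x. v x + u x \<partial>N) = (\<integral>\<^sup>+x. v x \<partial>N) + (\<integral>\<^sup>+x. u x \<partial>N)"
    using mN by (intro nn_integral_add) auto
  ultimately show ?case using add by (simp add: algebra_simps)
next
  case (seq U)
  have mM: "\<And>i. U i \<in> borel_measurable M" and mN: "\<And>i. U i \<in> borel_measurable N"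
    using seq(1) measurable_cong_sets[OF sM refl] measurable_cong_sets[OF sN refl] by blast+
  have "(\<integral>\<^sup>+x. (SUP i. U i) x \<partial>M) = (SUP i. (\<integral>\<^sup>+x. U i x \<partial>M))"
    using nn_integral_monotone_convergence_SUP[OF \<open>incseq U\<close> mM] by (simp add: image_comp)
  also have "\<dots> = (SUP i. c * U i a + (\<integral>\<^sup>+x. U i x \<partial>N))"
    using seq.IH by simp
  also have "\<dots> = (SUP i. c * U i a) + (SUP i. (\<integral>\<^sup>+x. U i x \<partial>N))"
  proof (rule ennreal_SUP_add)
    show "incseq (\<lambda>i. c * U i a)"
      using \<open>incseq U\<close> by (auto simp: incseq_def le_fun_def intro!: mult_left_mono)
    show "incseq (\<lambda>i. \<integral>\<^sup>+ x. U i x \<partial>N)"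
      using \<open>incseq U\<close> by (auto simp: incseq_def le_fun_def intro!: nn_integral_mono)
  qed
  also have "(SUP i. c * U i a) = c * (SUP i. U i) a"
    by (simp add: SUP_mult_left_ennreal image_comp)
  also have "(SUP i. (\<integral>\<^sup>+x. U i x \<partial>N)) = (\<integral>\<^sup>+x. (SUP i. U i) x \<partial>N)"
    using nn_integral_monotone_convergence_SUP[OF \<open>incseq U\<close> mN] by (simp add: image_comp)
  finally show ?case .
qed

definition dns :: "real \<Rightarrow> real \<Rightarrow> ennreal" where
  "dns \<alpha> x = ennreal (indicator {0..1-\<alpha>} x * beta \<alpha> / (1 - x))"

lemma dns_meas[measurable]: "dns \<alpha> \<in> borel_measurable borel"
  unfolding dns_def by measurable

lemma beta_facts:
  assumes "0 < \<alpha>" "\<alpha> < 1"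
  shows "0 < ln (1/\<alpha>)" "0 < beta \<alpha>" "beta \<alpha> * (1 + ln (1/\<alpha>)) = 1"
proof -
  show l: "0 < ln (1/\<alpha>)" using assms by simp
  then show "0 < beta \<alpha>" by (simp add: beta_def)
  show "beta \<alpha> * (1 + ln (1/\<alpha>)) = 1" using l by (simp add: beta_def)
qed

lemma repr:
  assumes "\<forall>A\<in>sets borel. emeasure M A = ennreal (beta \<alpha>) * indicator A a
        + (\<integral>\<^sup>+ x. ennreal (indicator ({0..1-\<alpha>} \<inter> A) x * beta \<alpha> / (1 - x)) \<partial>lborel)"
  shows "\<forall>A\<in>sets borel. emeasure M A = ennreal (beta \<alpha>) * indicator A a + emeasure (density lborel (dns \<alpha>)) A"
proof
  fix A :: "real set" assume A: "A \<in> sets borel"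
  have "emeasure (density lborel (dns \<alpha>)) A = (\<integral>\<^sup>+ x. dns \<alpha> x * indicator A x \<partial>lborel)"
    using A by (intro emeasure_density) auto
  also have "\<dots> = (\<integral>\<^sup>+ x. ennreal (indicator ({0..1-\<alpha>} \<inter> A) x * beta \<alpha> / (1 - x)) \<partial>lborel)"
    by (intro nn_integral_cong) (auto simp: dns_def indicator_def)
  finally show "emeasure M A = ennreal (beta \<alpha>) * indicator A a + emeasure (density lborel (dns \<alpha>)) A"
    using assms A by simp
qed

lemma integ:
  assumes sM: "sets M = sets borel"
    and em: "\<forall>A\<in>sets borel. emeasure M A = ennreal (beta \<alpha>) * indicator A a
        + (\<integral>\<^sup>+ x. ennreal (indicator ({0..1-\<alpha>} \<inter> A) x * beta \<alpha> / (1 - x)) \<partial>lborel)"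
    and f: "f \<in> borel_measurable borel"
  shows "(\<integral>\<^sup>+x. f x \<partial>M) = ennreal (beta \<alpha>) * f a + (\<integral>\<^sup>+x. dns \<alpha> x * f x \<partial>lborel)"
proof -
  have "(\<integral>\<^sup>+x. f x \<partial>M) = ennreal (beta \<alpha>) * f a + (\<integral>\<^sup>+x. f x \<partial>density lborel (dns \<alpha>))"
    by (rule nn_integral_atom_plus[OF sM _ repr[OF em] f]) simp
  also have "(\<integral>\<^sup>+x. f x \<partial>density lborel (dns \<alpha>)) = (\<integral>\<^sup>+x. dns \<alpha> x * f x \<partial>lborel)"
    using f by (intro nn_integral_density) auto
  finally show ?thesis .
qed

lemma dns_total:
  assumes "0 < \<alpha>" "\<alpha> < 1"
  shows "(\<integral>\<^sup>+ x. dns \<alpha> x \<partial>lborel) = ennreal (beta \<alpha> * ln (1/\<alpha>))"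
proof -
  have b: "0 < beta \<alpha>" using beta_facts[OF assms] by simp
  have "(\<integral>\<^sup>+ x. dns \<alpha> x \<partial>lborel) = (\<integral>\<^sup>+ x. ennreal (beta \<alpha> / (1 - x)) * indicator {0..1-\<alpha>} x \<partial>lborel)"
    by (intro nn_integral_cong) (auto simp: dns_def indicator_def)
  also have "\<dots> = (- beta \<alpha> * ln (1 - (1-\<alpha>))) - (- beta \<alpha> * ln (1 - 0))"
  proof (rule nn_integral_FTC_Icc)
    show "(\<lambda>x. beta \<alpha> / (1 - x)) \<in> borel_measurable borel" by measurable
    fix x assume x: "x \<in> {0..1-\<alpha>}"
    then have "1 - x > 0" using assms by auto
    then show "((\<lambda>x. - beta \<alpha> * ln (1 - x)) has_real_derivative beta \<alpha> / (1 - x)) (at x)"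
      by (auto intro!: derivative_eq_intros simp: field_simps)
    show "0 \<le> beta \<alpha> / (1 - x)" using b \<open>1 - x > 0\<close> by simp
  qed (use assms in auto)
  also have "(- beta \<alpha> * ln (1 - (1-\<alpha>))) - (- beta \<alpha> * ln (1 - 0)) = beta \<alpha> * ln (1/\<alpha>)"
    using assms by (simp add: ln_div)
  finally show ?thesis .
qed

lemma strat:
  assumes a: "0 < \<alpha>" "\<alpha> < 1" and sM: "sets M = sets borel"
    and em: "\<forall>A\<in>sets borel. emeasure M A = ennreal (beta \<alpha>) * indicator A a
        + (\<integral>\<^sup>+ x. ennreal (indicator ({0..1-\<alpha>} \<inter> A) x * beta \<alpha> / (1 - x)) \<partial>lborel)"
    and aS: "a \<in> {0..1-\<alpha>}"
  shows "M \<in> strategies \<alpha>"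
proof -
  have b: "0 < beta \<alpha>" "beta \<alpha> * (1 + ln (1/\<alpha>)) = 1" "0 < ln (1/\<alpha>)" using beta_facts[OF a] by auto
  have sp: "space M = UNIV" using sets_eq_imp_space_eq[OF sM] by simp
  have e: "emeasure M A = 1" if A: "{0..1-\<alpha>} \<subseteq> A" "A \<in> sets borel" for A
  proof -
    have "(\<integral>\<^sup>+ x. ennreal (indicator ({0..1-\<alpha>} \<inter> A) x * beta \<alpha> / (1 - x)) \<partial>lborel)
        = (\<integral>\<^sup>+ x. dns \<alpha> x \<partial>lborel)"
      using A by (intro nn_integral_cong) (auto simp: dns_def indicator_def)
    also have "\<dots> = ennreal (beta \<alpha> * ln (1/\<alpha>))" by (rule dns_total[OF a])
    finally have "emeasure M A = ennreal (beta \<alpha>) + ennreal (beta \<alpha> * ln (1/\<alpha>))"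
      using em A aS by auto
    also have "\<dots> = ennreal (beta \<alpha> * (1 + ln (1/\<alpha>)))"
      using b by (simp add: ennreal_plus[symmetric] algebra_simps del: ennreal_plus)
    finally show ?thesis using b by simp
  qed
  have "prob_space M" by (rule prob_spaceI) (simp add: sp e)
  moreover have "emeasure M {0..1-\<alpha>} = 1" by (rule e) auto
  ultimately show ?thesis using sM by (simp add: strategies_def)
qed

lemma payoff_alt: "payoff x y = (1 - y) * (if x \<le> y then 1 else 0) / (1 - x)"
  by (simp add: payoff_def indicator_def)

lemma payoff_meas1[measurable]: "(\<lambda>x. payoff x y) \<in> borel_measurable borel"
  unfolding payoff_alt by measurable

lemma payoff_meas2[measurable]: "(\<lambda>y. payoff x y) \<in> borel_measurable borel"
  unfolding payoff_alt by measurable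

lemma innerX:
  assumes a: "0 < \<alpha>" "\<alpha> < 1" and sM: "sets M = sets borel"
    and em: "\<forall>A\<in>sets borel. emeasure M A = ennreal (beta \<alpha>) * indicator A 0
        + (\<integral>\<^sup>+ x. ennreal (indicator ({0..1-\<alpha>} \<inter> A) x * beta \<alpha> / (1 - x)) \<partial>lborel)"
    and y: "0 \<le> y" "y \<le> 1 - \<alpha>"
  shows "(\<integral>\<^sup>+x. ennreal (payoff x y) \<partial>M) = ennreal (beta \<alpha>)"
proof -
  define b where "b = beta \<alpha>"
  have b: "0 < b" using beta_facts[OF a] by (simp add: b_def)
  have "(\<integral>\<^sup>+x. ennreal (payoff x y) \<partial>M) = ennreal b * ennreal (payoff 0 y) + (\<integral>\<^sup>+x. dns \<alpha> x * ennreal (payoff x y) \<partial>lborel)"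
    unfolding b_def by (rule integ[OF sM em]) measurable
  also have "payoff 0 y = 1 - y" using y by (simp add: payoff_def)
  also have "(\<integral>\<^sup>+x. dns \<alpha> x * ennreal (payoff x y) \<partial>lborel)
      = (\<integral>\<^sup>+x. ennreal (b * (1 - y) / (1 - x)^2) * indicator {0..y} x \<partial>lborel)"
  proof (intro nn_integral_cong)
    fix x :: real
    show "dns \<alpha> x * ennreal (payoff x y) = ennreal (b * (1 - y) / (1 - x)^2) * indicator {0..y} x"
    proof (cases "x \<in> {0..y}")
      case True
      then have x1: "1 - x > 0" using y a by auto
      have "dns \<alpha> x = ennreal (b / (1 - x))" using True y by (simp add: dns_def b_def)
      moreover have "payoff x y = (1 - y) / (1 - x)" using True by (simp add: payoff_def)
      ultimately have "dns \<alpha> x * ennreal (payoff x y) = ennreal (b / (1 - x)) * ennreal ((1 - y) / (1 - x))"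
        by simp
      also have "\<dots> = ennreal (b / (1 - x) * ((1 - y) / (1 - x)))"
        by (rule ennreal_mult[symmetric]) (use x1 b y a in auto)
      also have "b / (1 - x) * ((1 - y) / (1 - x)) = b * (1 - y) / (1 - x)^2"
        by (simp add: power2_eq_square)
      finally show ?thesis using True by simp
    next
      case False
      then have "x < 0 \<or> x > y" by auto
      then have "dns \<alpha> x = 0 \<or> payoff x y = 0"
        by (auto simp: dns_def payoff_def)
      then show ?thesis using False by auto
    qed
  qed
  also have "\<dots> = ennreal (b * (1 - y) / (1 - y) - b * (1 - y) / (1 - 0))"
  proof (rule nn_integral_FTC_Icc)
    show "(\<lambda>x. b * (1 - y) / (1 - x)^2) \<in> borel_measurable borel" by measurable
    fix x assume x: "x \<in> {0..y}"
    then have x1: "1 - x > 0" using y a by auto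
    then show "((\<lambda>x. b * (1 - y) / (1 - x)) has_real_derivative b * (1 - y) / (1 - x)^2) (at x)"
      by (auto intro!: derivative_eq_intros simp: field_simps power2_eq_square)
    show "0 \<le> b * (1 - y) / (1 - x)^2" using b y a by simp
  qed (use y in auto)
  also have "b * (1 - y) / (1 - y) - b * (1 - y) / (1 - 0) = b * y"
    using y a by (simp add: field_simps)
  finally have "(\<integral>\<^sup>+x. ennreal (payoff x y) \<partial>M) = ennreal (b * (1 - y)) + ennreal (b * y)"
    using b y a by (simp add: ennreal_mult)
  also have "\<dots> = ennreal b"
    using b y a by (simp add: ennreal_plus[symmetric] algebra_simps del: ennreal_plus)
  finally show ?thesis by (simp add: b_def)
qed

lemma innerY:
  assumes a: "0 < \<alpha>" "\<alpha> < 1" and sM: "sets M = sets borel"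
    and em: "\<forall>A\<in>sets borel. emeasure M A = ennreal (beta \<alpha>) * indicator A (1 - \<alpha>)
        + (\<integral>\<^sup>+ x. ennreal (indicator ({0..1-\<alpha>} \<inter> A) x * beta \<alpha> / (1 - x)) \<partial>lborel)"
    and x: "0 \<le> x" "x \<le> 1 - \<alpha>"
  shows "(\<integral>\<^sup>+y. ennreal (payoff x y) \<partial>M) = ennreal (beta \<alpha>)"
proof -
  define b where "b = beta \<alpha>"
  have b: "0 < b" using beta_facts[OF a] by (simp add: b_def)
  have x1: "1 - x > 0" using x a by auto
  have "(\<integral>\<^sup>+y. ennreal (payoff x y) \<partial>M) = ennreal b * ennreal (payoff x (1 - \<alpha>)) + (\<integral>\<^sup>+y. dns \<alpha> y * ennreal (payoff x y) \<partial>lborel)"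
    unfolding b_def by (rule integ[OF sM em]) measurable
  also have "payoff x (1 - \<alpha>) = \<alpha> / (1 - x)" using x by (simp add: payoff_def)
  also have "(\<integral>\<^sup>+y. dns \<alpha> y * ennreal (payoff x y) \<partial>lborel)
      = (\<integral>\<^sup>+y. ennreal (b / (1 - x)) * indicator {x..1-\<alpha>} y \<partial>lborel)"
  proof (intro nn_integral_cong)
    fix y :: real
    show "dns \<alpha> y * ennreal (payoff x y) = ennreal (b / (1 - x)) * indicator {x..1-\<alpha>} y"
    proof (cases "y \<in> {x..1-\<alpha>}")
      case True
      then have y1: "1 - y > 0" using x a by auto
      have "dns \<alpha> y = ennreal (b / (1 - y))" using True x by (simp add: dns_def b_def)
      moreover have "payoff x y = (1 - y) / (1 - x)" using True by (simp add: payoff_def)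
      ultimately have "dns \<alpha> y * ennreal (payoff x y) = ennreal (b / (1 - y)) * ennreal ((1 - y) / (1 - x))"
        by simp
      also have "\<dots> = ennreal (b / (1 - y) * ((1 - y) / (1 - x)))"
        by (rule ennreal_mult[symmetric]) (use x1 y1 b in auto)
      also have "b / (1 - y) * ((1 - y) / (1 - x)) = b / (1 - x)"
        using y1 by simp
      finally show ?thesis using True by simp
    next
      case False
      then have "y < x \<or> y > 1 - \<alpha>" by auto
      then have "dns \<alpha> y = 0 \<or> payoff x y = 0"
        by (auto simp: dns_def payoff_def)
      then show ?thesis using False by auto
    qed
  qed
  also have "\<dots> = ennreal (b / (1 - x)) * ennreal (1 - \<alpha> - x)"
    using x by (simp add: nn_integral_cmult_indicator)
  finally have "(\<integral>\<^sup>+y. ennreal (payoff x y) \<partial>M) = ennreal (b * (\<alpha> / (1 - x))) + ennreal (b / (1 - x) * (1 - \<alpha> - x))"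
    using ennreal_mult[symmetric, of b "\<alpha> / (1 - x)"] ennreal_mult[symmetric, of "b / (1 - x)" "1 - \<alpha> - x"]
      b x a x1 by simp
  also have "\<dots> = ennreal (b * (\<alpha> / (1 - x)) + b / (1 - x) * (1 - \<alpha> - x))"
    using b x a x1 by (simp add: ennreal_plus[symmetric] del: ennreal_plus)
  also have "b * (\<alpha> / (1 - x)) + b / (1 - x) * (1 - \<alpha> - x) = (b * \<alpha> + b * (1 - \<alpha> - x)) / (1 - x)"
    by (simp add: add_divide_distrib)
  also have "b * \<alpha> + b * (1 - \<alpha> - x) = b * (1 - x)" by (simp add: algebra_simps)
  also have "b * (1 - x) / (1 - x) = b" using x1 by simp
  finally show ?thesis by (simp add: b_def)
qed

lemma strat_facts:
  assumes "q \<in> strategies \<alpha>"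
  shows "prob_space q" "sets q = sets borel" "space q = UNIV" "AE y in q. y \<in> {0..1-\<alpha>}"
proof -
  show pq: "prob_space q" and sq: "sets q = sets borel" using assms by (auto simp: strategies_def)
  show "space q = UNIV" using sets_eq_imp_space_eq[OF sq] by simp
  have "measure q {0..1-\<alpha>} = 1" using assms by (simp add: strategies_def measure_def)
  then show "AE y in q. y \<in> {0..1-\<alpha>}" using prob_space.AE_prob_1[OF pq] by blast
qed

lemma inner_nn:
  assumes q: "q \<in> strategies \<alpha>" and a: "0 < \<alpha>"
  shows "(\<integral>y. payoff x y \<partial>q) = enn2real (\<integral>\<^sup>+y. ennreal (payoff x y) \<partial>q)"
    and "(\<integral>\<^sup>+y. ennreal (payoff x y) \<partial>q) \<le> 1"
proof -
  note sf = strat_facts[OF q]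
  have m: "(\<lambda>y. payoff x y) \<in> borel_measurable q"
    using measurable_cong_sets[OF sf(2) refl] payoff_meas2 by blast
  show "(\<integral>y. payoff x y \<partial>q) = enn2real (\<integral>\<^sup>+y. ennreal (payoff x y) \<partial>q)"
    by (rule integral_eq_nn_integral[OF m]) (use sf(4) in \<open>eventually_elim, use payoff_bounds a in auto\<close>)
  have "(\<integral>\<^sup>+y. ennreal (payoff x y) \<partial>q) \<le> (\<integral>\<^sup>+y. 1 \<partial>q)"
    by (rule nn_integral_mono_AE) (use sf(4) in \<open>eventually_elim, use payoff_bounds a in auto\<close>)
  also have "\<dots> = 1" using prob_space.emeasure_space_1[OF sf(1)] by simp
  finally show "(\<integral>\<^sup>+y. ennreal (payoff x y) \<partial>q) \<le> 1" .
qed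

lemma g_meas:
  assumes "sets p = sets borel" "q \<in> strategies \<alpha>"
  shows "(\<lambda>x. \<integral>y. payoff x y \<partial>q) \<in> borel_measurable p"
proof -
  note sf = strat_facts[OF assms(2)]
  interpret sigma_finite_measure q using prob_space_imp_sigma_finite[OF sf(1)] .
  show ?thesis by (rule borel_measurable_lebesgue_integral) (rule payoff_meas[OF assms(1) sf(2)])
qed

lemma G_meas:
  assumes "sets p = sets borel" "q \<in> strategies \<alpha>"
  shows "(\<lambda>x. \<integral>\<^sup>+y. ennreal (payoff x y) \<partial>q) \<in> borel_measurable p"
proof -
  note sf = strat_facts[OF assms(2)]
  interpret sigma_finite_measure q using prob_space_imp_sigma_finite[OF sf(1)] .
  show ?thesis by (rule borel_measurable_nn_integral) (rule payoff_meas_enn[OF assms(1) sf(2)])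
qed

lemma exp_bounds:
  assumes p: "p \<in> strategies \<alpha>" and q: "q \<in> strategies \<alpha>" and a: "0 < \<alpha>"
  shows "0 \<le> exp_payoff p q" "exp_payoff p q \<le> 1"
proof -
  note sp = strat_facts[OF p]
  have g01: "0 \<le> (\<integral>y. payoff x y \<partial>q) \<and> (\<integral>y. payoff x y \<partial>q) \<le> 1" for x
  proof -
    have "enn2real (\<integral>\<^sup>+y. ennreal (payoff x y) \<partial>q) \<le> enn2real 1"
      by (rule enn2real_mono) (use inner_nn(2)[OF q a] in auto)
    then show ?thesis using inner_nn(1)[OF q a] by simp
  qed
  have e: "exp_payoff p q = enn2real (\<integral>\<^sup>+x. ennreal (\<integral>y. payoff x y \<partial>q) \<partial>p)"
    unfolding exp_payoff_def
    by (rule integral_eq_nn_integral[OF g_meas[OF sp(2) q]]) (use g01 in auto)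
  show "0 \<le> exp_payoff p q" using e by simp
  have "(\<integral>\<^sup>+x. ennreal (\<integral>y. payoff x y \<partial>q) \<partial>p) \<le> (\<integral>\<^sup>+x. 1 \<partial>p)"
    by (rule nn_integral_mono) (use g01 in auto)
  also have "\<dots> = 1" using prob_space.emeasure_space_1[OF sp(1)] by simp
  finally show "exp_payoff p q \<le> 1" unfolding e
    using enn2real_mono[of _ 1] by fastforce
qed

lemma optX:
  assumes a: "0 < \<alpha>" "\<alpha> < 1" and M: "is_dist_X \<alpha> M" and q: "q \<in> strategies \<alpha>"
  shows "exp_payoff M q = beta \<alpha>"
proof -
  have sM: "sets M = sets borel"
    and em: "\<forall>A\<in>sets borel. emeasure M A = ennreal (beta \<alpha>) * indicator A 0
        + (\<integral>\<^sup>+ x. ennreal (indicator ({0..1-\<alpha>} \<inter> A) x * beta \<alpha> / (1 - x)) \<partial>lborel)"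
    using M by (auto simp: is_dist_X_def)
  have Ms: "M \<in> strategies \<alpha>" by (rule strat[OF a sM em]) (use a in auto)
  note sM' = strat_facts[OF Ms] and sq = strat_facts[OF q]
  define G where "G x = (\<integral>\<^sup>+y. ennreal (payoff x y) \<partial>q)" for x
  have Gm: "G \<in> borel_measurable M" unfolding G_def by (rule G_meas[OF sM q])
  have G1: "G x \<le> 1" for x unfolding G_def by (rule inner_nn(2)[OF q a(1)])
  have "exp_payoff M q = (\<integral>x. enn2real (G x) \<partial>M)"
    unfolding exp_payoff_def G_def inner_nn(1)[OF q a(1)] ..
  also have "\<dots> = enn2real (\<integral>\<^sup>+x. ennreal (enn2real (G x)) \<partial>M)"
    by (rule integral_eq_nn_integral) (use Gm in auto)
  also have "(\<integral>\<^sup>+x. ennreal (enn2real (G x)) \<partial>M) = (\<integral>\<^sup>+x. G x \<partial>M)"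
  proof (rule nn_integral_cong)
    fix x have "G x \<noteq> \<top>" using G1[of x] by (metis ennreal_one_neq_top neq_top_trans)
    then show "ennreal (enn2real (G x)) = G x" by (simp add: ennreal_enn2real_if)
  qed
  also have "(\<integral>\<^sup>+x. G x \<partial>M) = (\<integral>\<^sup>+y. (\<integral>\<^sup>+x. ennreal (payoff x y) \<partial>M) \<partial>q)"
  proof -
    interpret pair_sigma_finite M q
      unfolding pair_sigma_finite_def
      using prob_space_imp_sigma_finite[OF sM'(1)] prob_space_imp_sigma_finite[OF sq(1)] by simp
    show ?thesis unfolding G_def
      by (rule Fubini'[symmetric]) (rule payoff_meas_enn[OF sM sq(2)])
  qed
  also have "\<dots> = (\<integral>\<^sup>+y. ennreal (beta \<alpha>) \<partial>q)"
    by (rule nn_integral_cong_AE) (use sq(4) in \<open>eventually_elim, use innerX[OF a sM em] in auto\<close>)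
  also have "\<dots> = ennreal (beta \<alpha>)" using prob_space.emeasure_space_1[OF sq(1)] by simp
  finally show ?thesis using beta_facts[OF a] by simp
qed

lemma optY:
  assumes a: "0 < \<alpha>" "\<alpha> < 1" and M: "is_dist_Y \<alpha> M" and p: "p \<in> strategies \<alpha>"
  shows "exp_payoff p M = beta \<alpha>"
proof -
  have sM: "sets M = sets borel"
    and em: "\<forall>A\<in>sets borel. emeasure M A = ennreal (beta \<alpha>) * indicator A (1 - \<alpha>)
        + (\<integral>\<^sup>+ x. ennreal (indicator ({0..1-\<alpha>} \<inter> A) x * beta \<alpha> / (1 - x)) \<partial>lborel)"
    using M by (auto simp: is_dist_Y_def)
  have Ms: "M \<in> strategies \<alpha>" by (rule strat[OF a sM em]) (use a in auto)
  note sp = strat_facts[OF p]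
  have "exp_payoff p M = (\<integral>x. beta \<alpha> \<partial>p)"
    unfolding exp_payoff_def
  proof (rule integral_cong_AE)
    show "(\<lambda>x. \<integral>y. payoff x y \<partial>M) \<in> borel_measurable p" by (rule g_meas[OF sp(2) Ms])
    show "(\<lambda>x. beta \<alpha>) \<in> borel_measurable p" by simp
    show "AE x in p. (\<integral>y. payoff x y \<partial>M) = beta \<alpha>"
      using sp(4) proof eventually_elim
      case (elim x)
      then show ?case using inner_nn(1)[OF Ms a(1), of x] innerY[OF a sM em, of x] beta_facts[OF a] by simp
    qed
  qed
  also have "\<dots> = beta \<alpha>" using prob_space.prob_space[OF sp(1)] by simp
  finally show ?thesis .
qed

lemma dens_eq:
  assumes "A \<in> sets borel"
  shows "emeasure (density lborel (dns \<alpha>)) A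
    = (\<integral>\<^sup>+ x. ennreal (indicator ({0..1-\<alpha>} \<inter> A) x * beta \<alpha> / (1 - x)) \<partial>lborel)"
proof -
  have "emeasure (density lborel (dns \<alpha>)) A = (\<integral>\<^sup>+ x. dns \<alpha> x * indicator A x \<partial>lborel)"
    using assms by (intro emeasure_density) auto
  also have "\<dots> = (\<integral>\<^sup>+ x. ennreal (indicator ({0..1-\<alpha>} \<inter> A) x * beta \<alpha> / (1 - x)) \<partial>lborel)"
    by (intro nn_integral_cong) (auto simp: dns_def indicator_def)
  finally show ?thesis .
qed

lemma exists_dist:
  "\<exists>M. sets M = sets borel \<and> (\<forall>A\<in>sets borel. emeasure M A =
        ennreal (beta \<alpha>) * indicator A a
        + (\<integral>\<^sup>+ x. ennreal (indicator ({0..1-\<alpha>} \<inter> A) x * beta \<alpha> / (1 - x)) \<partial>lborel))"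
proof -
  obtain M where M: "sets M = sets borel" "\<forall>A\<in>sets borel. emeasure M A = ennreal (beta \<alpha>) * indicator A a + emeasure (density lborel (dns \<alpha>)) A"
    using exists_atom_plus[of "density lborel (dns \<alpha>)" "ennreal (beta \<alpha>)" a] by auto
  then show ?thesis using dens_eq by metis
qed

theorem lemma2:
  fixes \<alpha> :: real
  assumes "0 < \<alpha>" and "\<alpha> < 1"
  shows "game_value_is \<alpha> (beta \<alpha>)
    \<and> (\<exists>M. is_dist_X \<alpha> M) \<and> (\<forall>M. is_dist_X \<alpha> M \<longrightarrow> optimal_x \<alpha> (beta \<alpha>) M)
    \<and> (\<exists>M. is_dist_Y \<alpha> M) \<and> (\<forall>M. is_dist_Y \<alpha> M \<longrightarrow> optimal_y \<alpha> (beta \<alpha>) M)"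
proof -
  note a = assms
  define S where "S = strategies \<alpha>"
  define b where "b = beta \<alpha>"
  have exX: "\<exists>M. is_dist_X \<alpha> M" unfolding is_dist_X_def by (rule exists_dist)
  have exY: "\<exists>M. is_dist_Y \<alpha> M" unfolding is_dist_Y_def by (rule exists_dist)
  have XS: "M \<in> S" if "is_dist_X \<alpha> M" for M
    using that strat[OF a, of M 0] a by (auto simp: is_dist_X_def S_def)
  have YS: "M \<in> S" if "is_dist_Y \<alpha> M" for M
    using that strat[OF a, of M "1 - \<alpha>"] a by (auto simp: is_dist_Y_def S_def)
  have optX': "\<forall>M. is_dist_X \<alpha> M \<longrightarrow> optimal_x \<alpha> (beta \<alpha>) M"
    using XS optX[OF a] by (auto simp: optimal_x_def S_def)
  have optY': "\<forall>M. is_dist_Y \<alpha> M \<longrightarrow> optimal_y \<alpha> (beta \<alpha>) M"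
    using YS optY[OF a] by (auto simp: optimal_y_def S_def)
  obtain MX where MX: "is_dist_X \<alpha> MX" using exX by blast
  obtain MY where MY: "is_dist_Y \<alpha> MY" using exY by blast
  have ne: "S \<noteq> {}" using XS[OF MX] by blast
  have bnd: "0 \<le> exp_payoff p q" "exp_payoff p q \<le> 1" if "p \<in> S" "q \<in> S" for p q
    using exp_bounds[OF _ _ a(1), of p q] that by (auto simp: S_def)
  have EX: "exp_payoff MX q = b" if "q \<in> S" for q
    using optX[OF a MX, of q] that by (simp add: S_def b_def)
  have EY: "exp_payoff p MY = b" if "p \<in> S" for p
    using optY[OF a MY, of p] that by (simp add: S_def b_def)
  have low: "lower_value \<alpha> = b"
  proof -
    have F: "(INF p\<in>S. exp_payoff p q) \<le> b" if q: "q \<in> S" for q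
    proof -
      have "(INF p\<in>S. exp_payoff p q) \<le> exp_payoff MX q"
        by (rule cINF_lower) (use bnd q XS[OF MX] in \<open>auto intro!: bdd_belowI2\<close>)
      then show ?thesis using EX[OF q] by simp
    qed
    have FY: "(INF p\<in>S. exp_payoff p MY) = b"
    proof -
      have "(INF p\<in>S. exp_payoff p MY) = (INF p\<in>S. b)"
        by (rule INF_cong) (auto simp: EY)
      then show ?thesis using ne by simp
    qed
    have "(SUP q\<in>S. INF p\<in>S. exp_payoff p q) = b"
    proof (rule antisym)
      show "(SUP q\<in>S. INF p\<in>S. exp_payoff p q) \<le> b" by (rule cSUP_least[OF ne F])
      show "b \<le> (SUP q\<in>S. INF p\<in>S. exp_payoff p q)"
        by (rule cSUP_upper2[where x=MY]) (use F YS[OF MY] FY in \<open>auto intro!: bdd_aboveI2\<close>)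
    qed
    then show ?thesis by (simp add: lower_value_def S_def)
  qed
  have up: "upper_value \<alpha> = b"
  proof -
    have F: "b \<le> (SUP q\<in>S. exp_payoff p q)" if p: "p \<in> S" for p
    proof -
      have "exp_payoff p MY \<le> (SUP q\<in>S. exp_payoff p q)"
        by (rule cSUP_upper) (use bnd p YS[OF MY] in \<open>auto intro!: bdd_aboveI2\<close>)
      then show ?thesis using EY[OF p] by simp
    qed
    have FX: "(SUP q\<in>S. exp_payoff MX q) = b"
    proof -
      have "(SUP q\<in>S. exp_payoff MX q) = (SUP q\<in>S. b)"
        by (rule SUP_cong) (auto simp: EX)
      then show ?thesis using ne by simp
    qed
    have "(INF p\<in>S. SUP q\<in>S. exp_payoff p q) = b"
    proof (rule antisym)
      show "b \<le> (INF p\<in>S. SUP q\<in>S. exp_payoff p q)" by (rule cINF_greatest[OF ne F])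
      show "(INF p\<in>S. SUP q\<in>S. exp_payoff p q) \<le> b"
        by (rule cINF_lower2[where x=MX]) (use F XS[OF MX] FX in \<open>auto intro!: bdd_belowI2\<close>)
    qed
    then show ?thesis by (simp add: upper_value_def S_def)
  qed
  show ?thesis using low up exX exY optX' optY' by (simp add: game_value_is_def b_def)
qed

end
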